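(* Let $u\in C^4(\mathbb{R}^3)$ be a $2$-convex solution of $\sigma_2(D^2u)=1$ in $\mathbb{R}^3$. Then at every point, $$\sum_{i,j=1}^3\sigma_2^{ij}\,(\log\Delta u)_{ij}\ \ge\ \frac{1}{25}\sum_{i,j=1}^3\sigma_2^{ij}\,(\log\Delta u)_i\,(\log\Delta u)_j.$$
   Context: $\sigma_2(D^2u)$ is the second elementary symmetric function of the eigenvalues of $D^2u$, and $\sigma_2^{ij}=\partial\sigma_2/\partial u_{ij}$ evaluated at $D^2u$ (so $\sigma_2^{ij}=\Delta u\,\delta_{ij}-u_{ij}$). A function is $2$-convex if the eigenvalues $\lambda$ of its Hessian satisfy $\sigma_1(\lambda)>0$, $\sigma_2(\lambda)>0$ at every point; in particular $\Delta u=\sigma_1(D^2u)>0$. Subscripts denote partial derivatives. *)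

theory Defs
  imports "HOL-Analysis.Analysis"
begin

definition pd :: "3 \<Rightarrow> (real^3 \<Rightarrow> real) \<Rightarrow> real^3 \<Rightarrow> real" where
  "pd i f x = deriv (\<lambda>t. f (x + t *\<^sub>R axis i 1)) 0"

definition has_pd_everywhere :: "3 \<Rightarrow> (real^3 \<Rightarrow> real) \<Rightarrow> bool" where
  "has_pd_everywhere i f \<longleftrightarrow>
     (\<forall>x. (\<lambda>t. f (x + t *\<^sub>R axis i 1)) differentiable (at 0))"

fun Ck :: "nat \<Rightarrow> (real^3 \<Rightarrow> real) \<Rightarrow> bool" where
  "Ck 0 f \<longleftrightarrow> continuous_on UNIV f"
| "Ck (Suc k) f \<longleftrightarrow> continuous_on UNIV f \<and>
      (\<forall>i. has_pd_everywhere i f \<and> Ck k (pd i f))"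

definition hess :: "(real^3 \<Rightarrow> real) \<Rightarrow> real^3 \<Rightarrow> real^3^3" where
  "hess u x = (\<chi> i j. pd i (pd j u) x)"

(* sigma_1 and sigma_2 of a (symmetric) 3x3 matrix: elementary symmetric functions
   of its eigenvalues, written as trace and sum of principal 2x2 minors *)
definition sigma1 :: "real^3^3 \<Rightarrow> real" where
  "sigma1 A = (\<Sum>i\<in>UNIV. A $ i $ i)"

definition sigma2 :: "real^3^3 \<Rightarrow> real" where
  "sigma2 A = (\<Sum>i\<in>UNIV. \<Sum>j\<in>UNIV. if i < j then A $ i $ i * A $ j $ j - A $ i $ j * A $ j $ i else 0)"

(* sigma_2^{ij} = d sigma_2 / d a_ij at A, for symmetric A: trace(A) delta_ij - a_ij *)
definition sigma2_cof :: "real^3^3 \<Rightarrow> 3 \<Rightarrow> 3 \<Rightarrow> real" where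
  "sigma2_cof A i j = sigma1 A * (if i = j then 1 else 0) - A $ i $ j"

definition lap :: "(real^3 \<Rightarrow> real) \<Rightarrow> real^3 \<Rightarrow> real" where
  "lap u x = sigma1 (hess u x)"

definition two_convex :: "(real^3 \<Rightarrow> real) \<Rightarrow> bool" where
  "two_convex u \<longleftrightarrow> (\<forall>x. sigma1 (hess u x) > 0 \<and> sigma2 (hess u x) > 0)"

end

theory Submission
  imports Defs "HOL-Analysis.Cross3"
begin

lemma core_sosid: fixes a b c :: real shows "(2*(a+b+c)*((a+b+c)+c)-(26/25)*(b-a)^2) - 5*(a*b+b*c+c*a) = (3/4)*(a+b+(2/3)*c)^2 + (21/100)*(a-b)^2 + (11/3)*c^2"
  by (simp add: power2_eq_square field_simps)

lemma core_detid: fixes a b c k :: real shows "(2*(a+b+c)*((a+b+c)+c)-k*(b-a)^2)*(2*(a+b+c)*((a+b+c)+b)-k*(c-a)^2) - (2*(a+b+c)*a-k*(b-a)*(c-a))^2 = (a+b+c)*(4*(a+b+c)*(a*b+b*c+c*a) + 8*(b+c)*(a+b+c)*(a+b+c) + 10*k*(b+c)*(a*b+b*c+c*a) - k*(b+c)*(6*a*a+4*a*(b+c)+4*(b+c)*(b+c)))"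
  by (simp add: power2_eq_square algebra_simps)

lemma core_id1: fixes a b c k x2 x3 :: real shows "(a+b+c)*((-((a+c)*x2+(a+b)*x3))*(-((a+c)*x2+(a+b)*x3))+3*(b+c)*(b+c)*x2*x2+3*(b+c)*(b+c)*x3*x3-((-((a+c)*x2+(a+b)*x3))+(b+c)*x2+(b+c)*x3)^2)-k*(b+c)*((-((a+c)*x2+(a+b)*x3))+(b+c)*x2+(b+c)*x3)^2
 = (b+c)*((2*(a+b+c)*((a+b+c)+c)-k*(b-a)^2)*x2*x2+2*(2*(a+b+c)*a-k*(b-a)*(c-a))*x2*x3+(2*(a+b+c)*((a+b+c)+b)-k*(c-a)^2)*x3*x3)"
  by (simp add: power2_eq_square algebra_simps)

lemma core_id0: fixes s p k x1 x2 x3 :: real shows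
  "p^2*(s*(x1^2+3*x2^2+3*x3^2-(x1+x2+x3)^2) - k*p*(x1+x2+x3)^2)
   = s*((p*x1)*(p*x1)+3*p*p*x2*x2+3*p*p*x3*x3-((p*x1)+p*x2+p*x3)^2)-k*p*((p*x1)+p*x2+p*x3)^2"
  by (simp add: power2_eq_square algebra_simps)

lemma core_id2: fixes M11 M12 M22 x2 x3 :: real shows
  "M11*(M11*x2*x2+2*M12*x2*x3+M22*x3*x3) = (M11*x2+M12*x3)^2 + (M11*M22 - M12^2)*x3^2"
  by (simp add: power2_eq_square algebra_simps)

lemma core1:
  fixes a b c x1 x2 x3 :: real
  assumes s: "a+b+c>0" and s2: "a*b+b*c+c*a>0" and cons: "(b+c)*x1+(a+c)*x2+(a+b)*x3 = 0"
  shows "(a+b+c)*(x1^2+3*x2^2+3*x3^2-(x1+x2+x3)^2) \<ge> (26/25)*(b+c)*(x1+x2+x3)^2"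
proof -
  define p where "p = b+c"
  have bch: "p^2/4 - b*c = (b-c)^2/4" unfolding p_def by (simp add: power2_eq_square field_simps)
  have bc: "b*c \<le> p^2/4" using bch zero_le_power2[of "b-c"] by linarith
  have e1: "a*b+b*c+c*a = a*p + b*c" unfolding p_def by (simp add: algebra_simps)
  have e2: "a*p + p^2/4 = p*(a + p/4)" by (simp add: power2_eq_square field_simps)
  have pp: "p > 0"
  proof (rule ccontr)
    assume "\<not> p > 0" hence p0: "p \<le> 0" by simp
    have "0 \<le> a + p/4" using p0 s unfolding p_def by (simp add: field_simps)
    hence "p*(a + p/4) \<le> 0" using p0 by (simp add: mult_nonpos_nonneg)
    thus False using s2 e1 e2 bc by linarith
  qed
  have e3: "4*a*p + p^2 = p*(4*a+p)" by (simp add: power2_eq_square algebra_simps)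
  have "p*(4*a+p) > 0" using s2 e1 e3 bc by linarith
  hence a4: "4*a + p > 0" using pp by (simp add: zero_less_mult_iff)
  define S where "S = a+b+c"
  define sg where "sg = a*b+b*c+c*a"
  define k :: real where "k = 26/25"
  define M11 where "M11 = 2*(a+b+c)*((a+b+c)+c)-k*(b-a)^2"
  define M22 where "M22 = 2*(a+b+c)*((a+b+c)+b)-k*(c-a)^2"
  define M12 where "M12 = 2*(a+b+c)*a-k*(b-a)*(c-a)"
  have "M11 - 5*(a*b+b*c+c*a) \<ge> 0" unfolding M11_def k_def core_sosid by simp
  moreover have "5*(a*b+b*c+c*a) > 0" using s2 by simp
  ultimately have M11p: "M11 > 0" by (simp add: algebra_simps)
  have q1: "8*S*S - k*(6*a*a+4*a*p+4*p*p) \<ge> 0"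
  proof -
    have eq: "8*S*S - k*(6*a*a+4*a*p+4*p*p) = (44*(a*a) + p*(296*a+96*p))/25"
      unfolding S_def p_def k_def by (simp add: algebra_simps)
    have "296*a+96*p > 0" using a4 pp by simp
    hence "p*(296*a+96*p) \<ge> 0" using pp by simp
    hence "44*(a*a) + p*(296*a+96*p) \<ge> 0" by (simp add: add_nonneg_nonneg)
    thus ?thesis unfolding eq by simp
  qed
  have "4*S* sg + 8*p*S*S + 10*k*p* sg - k*p*(6*a*a+4*a*p+4*p*p)
        = 4*S* sg + 10*k*p* sg + p*(8*S*S - k*(6*a*a+4*a*p+4*p*p))" by (simp add: algebra_simps)
  moreover have "4*S* sg + 10*k*p* sg + p*(8*S*S - k*(6*a*a+4*a*p+4*p*p)) \<ge> 0"
  proof -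
    have "S > 0" "sg > 0" "k > 0" using s s2 unfolding S_def sg_def k_def by auto
    thus ?thesis using q1 pp by (simp add: add_nonneg_nonneg)
  qed
  ultimately have "4*S* sg + 8*p*S*S + 10*k*p* sg - k*p*(6*a*a+4*a*p+4*p*p) \<ge> 0" by simp
  hence det: "M11*M22 - M12^2 \<ge> 0" unfolding M11_def M22_def M12_def core_detid
    using s unfolding S_def sg_def p_def by simp
  define Q where "Q = M11*x2*x2+2*M12*x2*x3+M22*x3*x3"
  have "M11*Q \<ge> 0" unfolding Q_def core_id2 using det by simp
  hence Qp: "Q \<ge> 0" using M11p by (simp add: zero_le_mult_iff)
  have x1: "p*x1 = -((a+c)*x2+(a+b)*x3)" using cons unfolding p_def by (simp add: algebra_simps)
  have "p^2*((a+b+c)*(x1^2+3*x2^2+3*x3^2-(x1+x2+x3)^2) - k*p*(x1+x2+x3)^2) = p*Q"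
    unfolding core_id0 x1 unfolding Q_def M11_def M12_def M22_def p_def core_id1 ..
  hence "p^2*((a+b+c)*(x1^2+3*x2^2+3*x3^2-(x1+x2+x3)^2) - k*p*(x1+x2+x3)^2) \<ge> 0"
    using Qp pp by simp
  hence "(a+b+c)*(x1^2+3*x2^2+3*x3^2-(x1+x2+x3)^2) - k*p*(x1+x2+x3)^2 \<ge> 0"
    using pp by (simp add: zero_le_mult_iff)
  thus ?thesis unfolding k_def p_def by simp
qed

lemma diag_ineq:
  fixes l :: "3 \<Rightarrow> real" and T :: "3 \<Rightarrow> 3 \<Rightarrow> 3 \<Rightarrow> real"
  assumes sym1: "\<And>i j k. T i j k = T j i k" and sym2: "\<And>i j k. T i j k = T i k j"
    and s: "l 1 + l 2 + l 3 > 0" and s2: "l 1 * l 2 + l 2 * l 3 + l 3 * l 1 > 0"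
    and cons: "\<And>k. (\<Sum>i\<in>UNIV. ((l 1 + l 2 + l 3) - l i) * T i i k) = 0"
  shows "(26/25) * (\<Sum>k\<in>UNIV. ((l 1 + l 2 + l 3) - l k) * (\<Sum>i\<in>UNIV. T i i k) * (\<Sum>i\<in>UNIV. T i i k))
     \<le> (l 1 + l 2 + l 3) * (\<Sum>m\<in>UNIV. (\<Sum>i\<in>UNIV. \<Sum>j\<in>UNIV. T i j m * T i j m) - (\<Sum>i\<in>UNIV. T i i m) * (\<Sum>i\<in>UNIV. T i i m))"
proof -
  have r: "T 1 2 1 = T 1 1 2"
    "T 1 2 2 = T 2 2 1"
    "T 1 3 1 = T 1 1 3"
    "T 1 3 2 = T 1 2 3"
    "T 1 3 3 = T 3 3 1"
    "T 2 1 1 = T 1 1 2"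
    "T 2 1 2 = T 2 2 1"
    "T 2 1 3 = T 1 2 3"
    "T 2 3 1 = T 1 2 3"
    "T 2 3 2 = T 2 2 3"
    "T 2 3 3 = T 3 3 2"
    "T 3 1 1 = T 1 1 3"
    "T 3 1 2 = T 1 2 3"
    "T 3 1 3 = T 3 3 1"
    "T 3 2 1 = T 1 2 3"
    "T 3 2 2 = T 2 2 3"
    "T 3 2 3 = T 3 3 2"
    by (metis sym1 sym2)+
  have c1: "(l 2 + l 3) * T 1 1 1 + (l 1 + l 3) * T 2 2 1 + (l 1 + l 2) * T 3 3 1 = 0"
    using cons[of 1] by (simp add: sum_3 algebra_simps)
  have c2: "(l 1 + l 3) * T 2 2 2 + (l 2 + l 3) * T 1 1 2 + (l 2 + l 1) * T 3 3 2 = 0"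
    using cons[of 2] by (simp add: sum_3 r algebra_simps)
  have c3: "(l 1 + l 2) * T 3 3 3 + (l 3 + l 2) * T 1 1 3 + (l 3 + l 1) * T 2 2 3 = 0"
    using cons[of 3] by (simp add: sum_3 r algebra_simps)
  have i1: "(26/25)*((l 2 + l 3)*(T 1 1 1 + T 2 2 1 + T 3 3 1)^2) \<le> (l 1 + l 2 + l 3)*((T 1 1 1)^2+3*(T 2 2 1)^2+3*(T 3 3 1)^2-(T 1 1 1 + T 2 2 1 + T 3 3 1)^2)"
    using core1[OF s s2 c1] by (simp only: mult.assoc)
  have i2: "(26/25)*((l 1 + l 3)*(T 2 2 2 + T 1 1 2 + T 3 3 2)^2) \<le> (l 2 + l 1 + l 3)*((T 2 2 2)^2+3*(T 1 1 2)^2+3*(T 3 3 2)^2-(T 2 2 2 + T 1 1 2 + T 3 3 2)^2)"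
    proof -
    have s': "l 2 + l 1 + l 3 > 0" using s by simp
    have s2': "l 2 * l 1 + l 1 * l 3 + l 3 * l 2 > 0" using s2 by (simp add: algebra_simps)
    show ?thesis using core1[OF s' s2' c2] by (simp only: mult.assoc)
  qed
  have i3: "(26/25)*((l 1 + l 2)*(T 3 3 3 + T 1 1 3 + T 2 2 3)^2) \<le> (l 3 + l 1 + l 2)*((T 3 3 3)^2+3*(T 1 1 3)^2+3*(T 2 2 3)^2-(T 3 3 3 + T 1 1 3 + T 2 2 3)^2)"
    proof -
    have s': "l 3 + l 1 + l 2 > 0" using s by simp
    have s2': "l 3 * l 1 + l 1 * l 2 + l 2 * l 3 > 0" using s2 by (simp add: algebra_simps)
    show ?thesis using core1[OF s' s2' c3] by (simp only: mult.assoc)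
  qed
  have L0: "(\<Sum>k\<in>UNIV. ((l 1 + l 2 + l 3) - l k) * (\<Sum>i\<in>UNIV. T i i k) * (\<Sum>i\<in>UNIV. T i i k))
    = (l 2 + l 3)*(T 1 1 1 + T 2 2 1 + T 3 3 1)^2 + (l 1 + l 3)*(T 2 2 2 + T 1 1 2 + T 3 3 2)^2
      + (l 1 + l 2)*(T 3 3 3 + T 1 1 3 + T 2 2 3)^2"
    by (simp add: sum_3 r power2_eq_square algebra_simps)
  have L: "(26/25) * (\<Sum>k\<in>UNIV. ((l 1 + l 2 + l 3) - l k) * (\<Sum>i\<in>UNIV. T i i k) * (\<Sum>i\<in>UNIV. T i i k))
    = (26/25)*((l 2 + l 3)*(T 1 1 1 + T 2 2 1 + T 3 3 1)^2) + (26/25)*((l 1 + l 3)*(T 2 2 2 + T 1 1 2 + T 3 3 2)^2)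
      + (26/25)*((l 1 + l 2)*(T 3 3 3 + T 1 1 3 + T 2 2 3)^2)"
    unfolding L0 by (simp only: distrib_left)
  have R: "(l 1 + l 2 + l 3) * (\<Sum>m\<in>UNIV. (\<Sum>i\<in>UNIV. \<Sum>j\<in>UNIV. T i j m * T i j m) - (\<Sum>i\<in>UNIV. T i i m) * (\<Sum>i\<in>UNIV. T i i m))
    = (l 1 + l 2 + l 3)*((T 1 1 1)^2+3*(T 2 2 1)^2+3*(T 3 3 1)^2-(T 1 1 1 + T 2 2 1 + T 3 3 1)^2)
      + (l 2 + l 1 + l 3)*((T 2 2 2)^2+3*(T 1 1 2)^2+3*(T 3 3 2)^2-(T 2 2 2 + T 1 1 2 + T 3 3 2)^2)
      + (l 3 + l 1 + l 2)*((T 3 3 3)^2+3*(T 1 1 3)^2+3*(T 2 2 3)^2-(T 3 3 3 + T 1 1 3 + T 2 2 3)^2)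
      + (l 1 + l 2 + l 3)*(6*(T 1 2 3)^2)"
    by (simp add: sum_3 r power2_eq_square algebra_simps)
  have B4: "0 \<le> (l 1 + l 2 + l 3)*(6*(T 1 2 3)^2)" using s by simp
  show ?thesis unfolding L R using add_mono[OF add_mono[OF i1 i2] i3] B4 by linarith
qed

lemma sym_inner:
  fixes A :: "real^'n^'n" assumes "transpose A = A" shows "x \<bullet> (A *v y) = (A *v x) \<bullet> y"
  by (metis assms dot_lmul_matrix transpose_matrix_vector)

lemma small_pos_contra:
  fixes R C :: real
  assumes R: "R > 0" and key: "\<And>t. t > 0 \<Longrightarrow> 2*t*R \<le> t^2 * C"
  shows False
proof -
  define t where "t = R / (\<bar>C\<bar> + 1)"
  have t: "t > 0" using R unfolding t_def by simp
  have "2*t*R \<le> t^2 * C" using key[OF t] .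
  also have "\<dots> \<le> t^2 * \<bar>C\<bar>" by (simp add: mult_left_mono)
  also have "\<dots> < t^2 * (\<bar>C\<bar> + 1)" using t by simp
  also have "\<dots> = t * R" unfolding t_def by (simp add: power2_eq_square)
  finally have "2*t*R < t*R" .
  thus False using t R by (simp add: mult_pos_pos)
qed

lemma eigvec:
  fixes A :: "real^3^3" and Z :: "(real^3) set"
  assumes symA: "transpose A = A"
    and inv: "\<And>x. (\<forall>z\<in>Z. x \<bullet> z = 0) \<Longrightarrow> (\<forall>z\<in>Z. (A *v x) \<bullet> z = 0)"
    and ne: "\<exists>x. norm x = 1 \<and> (\<forall>z\<in>Z. x \<bullet> z = 0)"
  shows "\<exists>v. norm v = 1 \<and> (\<forall>z\<in>Z. v \<bullet> z = 0) \<and> A *v v = (v \<bullet> (A *v v)) *\<^sub>R v"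
proof -
  define K where "K = sphere (0::real^3) 1 \<inter> (\<Inter>z\<in>Z. {x. z \<bullet> x = 0})"
  have Kc: "compact K" unfolding K_def
    by (intro compact_Int_closed compact_sphere closed_INT ballI closed_hyperplane)
  have Kiff: "x \<in> K \<longleftrightarrow> norm x = 1 \<and> (\<forall>z\<in>Z. x \<bullet> z = 0)" for x
    unfolding K_def by (auto simp: inner_commute)
  have Kne: "K \<noteq> {}" using ne Kiff by auto
  define q where "q x = x \<bullet> (A *v x)" for x
  have "continuous_on K q" unfolding q_def by (intro continuous_intros)
  then obtain v where vK: "v \<in> K" and vmax: "\<And>y. y \<in> K \<Longrightarrow> q y \<le> q v"
    using continuous_attains_sup[OF Kc Kne] by blast
  have v1: "norm v = 1" and vZ: "\<forall>z\<in>Z. v \<bullet> z = 0" using vK Kiff by auto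
  have vv: "v \<bullet> v = 1" using v1 by (metis power2_norm_eq_inner power_one)
  define r where "r = A *v v - q v *\<^sub>R v"
  have AvZ: "\<forall>z\<in>Z. (A *v v) \<bullet> z = 0" using inv[OF vZ] .
  have rZ: "\<forall>z\<in>Z. r \<bullet> z = 0" using AvZ vZ unfolding r_def by (simp add: inner_diff_left)
  have vr: "v \<bullet> r = 0" unfolding r_def q_def using vv by (simp add: inner_diff_right)
  hence rv: "r \<bullet> v = 0" by (simp add: inner_commute)
  have Av: "A *v v = r + q v *\<^sub>R v" unfolding r_def by simp
  have rAv: "r \<bullet> (A *v v) = r \<bullet> r" unfolding Av using rv by (simp add: inner_add_right inner_commute)
  have vAr: "v \<bullet> (A *v r) = r \<bullet> r" using rAv sym_inner[OF symA, of v r] by (simp add: inner_commute)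
  have key: "2*t*(r \<bullet> r) \<le> t^2 * (q v * (r \<bullet> r) - q r)" if t: "t > 0" for t
  proof -
    define w where "w = v + t *\<^sub>R r"
    have ww: "w \<bullet> w = 1 + t^2 * (r \<bullet> r)" unfolding w_def using vv rv
      by (simp add: inner_add_left inner_add_right inner_commute power2_eq_square)
    have wpos: "w \<bullet> w > 0" unfolding ww by (simp add: add_pos_nonneg)
    have "w \<noteq> 0" using wpos by auto
    hence nw: "norm w > 0" by simp
    have nw2: "(norm w)^2 = w \<bullet> w" by (simp add: power2_norm_eq_inner)
    have "(1/norm w) *\<^sub>R w \<in> K" unfolding Kiff using nw vZ rZ unfolding w_def
      by (simp add: inner_add_left)
    hence "q ((1/norm w) *\<^sub>R w) \<le> q v" by (rule vmax)
    moreover have "q ((1/norm w) *\<^sub>R w) = q w / (w \<bullet> w)"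
      unfolding q_def nw2[symmetric] by (simp add: matrix_vector_mult_scaleR power2_eq_square)
    ultimately have "q w / (w \<bullet> w) \<le> q v" by simp
    hence qw: "q w \<le> q v * (w \<bullet> w)" using wpos by (simp add: divide_le_eq)
    have "q w = q v + 2*t*(r \<bullet> r) + t^2 * q r" unfolding q_def w_def
      using rAv vAr by (simp add: matrix_vector_right_distrib matrix_vector_mult_scaleR inner_add_left inner_add_right power2_eq_square algebra_simps)
    with qw ww have "q v + 2*t*(r \<bullet> r) + t^2 * q r \<le> q v * (1 + t^2 * (r \<bullet> r))" by simp
    thus ?thesis by (simp add: algebra_simps)
  qed
  have "r \<bullet> r = 0"
  proof (rule ccontr)
    assume "r \<bullet> r \<noteq> 0"
    hence "r \<bullet> r > 0" by (simp add: order_le_neq_trans[OF inner_ge_zero] less_le)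
    thus False using small_pos_contra[of "r \<bullet> r" "q v * (r \<bullet> r) - q r"] key by blast
  qed
  hence "r = 0" by simp
  hence "A *v v = q v *\<^sub>R v" unfolding r_def by simp
  thus ?thesis using v1 vZ unfolding q_def by blast
qed

lemma eig_inv:
  fixes A :: "real^3^3"
  assumes symA: "transpose A = A" and ev: "A *v z = c *\<^sub>R z" and xz: "x \<bullet> z = 0"
  shows "(A *v x) \<bullet> z = 0"
proof -
  have "(A *v x) \<bullet> z = x \<bullet> (A *v z)" using sym_inner[OF symA, of x z] by simp
  also have "\<dots> = c * (x \<bullet> z)" unfolding ev by simp
  finally show ?thesis using xz by simp
qed

lemma orthoV:
  fixes v1 v2 v3 :: "real^3" and V :: "3 \<Rightarrow> real^3"
  assumes V: "V 1 = v1" "V 2 = v2" "V 3 = v3" and v: "v1 \<bullet> v1 = 1" "v2 \<bullet> v2 = 1" "v3 \<bullet> v3 = 1"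
   and o: "v2 \<bullet> v1 = 0" "v3 \<bullet> v1 = 0" "v3 \<bullet> v2 = 0"
  shows "V a \<bullet> V b = (if a = b then 1 else 0)"
proof -
  have o2: "v1 \<bullet> v2 = 0" "v1 \<bullet> v3 = 0" "v2 \<bullet> v3 = 0" using o by (simp_all add: inner_commute)
  show ?thesis using exhaust_3[of a] exhaust_3[of b] by (elim disjE) (simp_all add: V v o o2)
qed

lemma spectral3:
  fixes A :: "real^3^3" assumes symA: "\<And>i j. A$i$j = A$j$i"
  obtains P :: "3\<Rightarrow>3\<Rightarrow>real" and l :: "3\<Rightarrow>real" where
    "\<And>a b. (\<Sum>i\<in>UNIV. P i a * P i b) = (if a = b then 1 else 0)"
    "\<And>i j. (\<Sum>a\<in>UNIV. P i a * P j a) = (if i = j then 1 else 0)"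
    "\<And>i j. A$i$j = (\<Sum>a\<in>UNIV. l a * P i a * P j a)"
proof -
  have tA: "transpose A = A" by (simp add: transpose_def vec_eq_iff symA)
  obtain x0 :: "real^3" where "norm x0 = 1" using vector_choose_size[of 1] by auto
  then obtain v1 where v1: "norm v1 = 1" "A *v v1 = (v1 \<bullet> (A *v v1)) *\<^sub>R v1"
    using eigvec[OF tA, of "{}"] by auto
  obtain y where y: "y \<noteq> 0" "orthogonal v1 y" using orthogonal_to_vector_exists[of v1] by auto
  have "norm ((1/norm y) *\<^sub>R y) = 1" "((1/norm y) *\<^sub>R y) \<bullet> v1 = 0"
    using y by (auto simp: orthogonal_def inner_commute)
  hence ne2: "\<exists>x. norm x = 1 \<and> (\<forall>z\<in>{v1}. x \<bullet> z = 0)" by blast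
  obtain v2 where v2: "norm v2 = 1" "v2 \<bullet> v1 = 0" "A *v v2 = (v2 \<bullet> (A *v v2)) *\<^sub>R v2"
    using eigvec[OF tA _ ne2] eig_inv[OF tA v1(2)] by auto
  have v11: "v1 \<bullet> v1 = 1" "v2 \<bullet> v2 = 1" using v1 v2 by (metis power2_norm_eq_inner power_one)+
  have "(norm (cross3 v1 v2))^2 = 1" using norm_cross_dot[of v1 v2] v1 v2 by (simp add: inner_commute)
  hence "norm (cross3 v1 v2) = 1" using norm_ge_zero[of "cross3 v1 v2"] by (auto simp add: power2_eq_1_iff)
  moreover have "cross3 v1 v2 \<bullet> v1 = 0" using dot_cross_self(1)[of v1 v2] by (simp add: inner_commute)
  moreover have "cross3 v1 v2 \<bullet> v2 = 0" using dot_cross_self(3)[of v1 v2] by simp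
  ultimately have ne3: "\<exists>x. norm x = 1 \<and> (\<forall>z\<in>{v1,v2}. x \<bullet> z = 0)" by blast
  have inv3: "\<forall>z\<in>{v1,v2}. (A *v x) \<bullet> z = 0" if "\<forall>z\<in>{v1,v2}. x \<bullet> z = 0" for x
    using that eig_inv[OF tA v1(2), of x] eig_inv[OF tA v2(3), of x] by simp
  obtain v3 where v3: "norm v3 = 1" "\<forall>z\<in>{v1,v2}. v3 \<bullet> z = 0" "A *v v3 = (v3 \<bullet> (A *v v3)) *\<^sub>R v3"
    using eigvec[OF tA inv3 ne3] by blast
  have v3': "v3 \<bullet> v1 = 0" "v3 \<bullet> v2 = 0" using v3(2) by auto
  have v33: "v3 \<bullet> v3 = 1" using v3 by (metis power2_norm_eq_inner power_one)
  define V where "V a = (if a = 1 then v1 else if a = 2 then v2 else v3)" for a :: 3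
  define P where "P i a = V a $ i" for i a
  define l where "l a = V a \<bullet> (A *v V a)" for a
  have V: "V 1 = v1" "V 2 = v2" "V 3 = v3" unfolding V_def by auto
  have ev: "A *v V a = l a *\<^sub>R V a" for a
    using exhaust_3[of a] V v1(2) v2(3) v3(3) unfolding l_def by auto
  have col: "(\<Sum>i\<in>UNIV. P i a * P i b) = (if a = b then 1 else 0)" for a b
  proof -
    have "(\<Sum>i\<in>UNIV. P i a * P i b) = V a \<bullet> V b" unfolding P_def inner_vec_def by simp
    also have "\<dots> = (if a = b then 1 else 0)"
      by (rule orthoV[OF V v11 v33 v2(2) v3'])
    finally show ?thesis .
  qed
  define M :: "real^3^3" where "M = (\<chi> i a. P i a)"
  have "transpose M ** M = mat 1"
    by (simp add: M_def transpose_def matrix_matrix_mult_def mat_def vec_eq_iff col)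
  hence MM: "M ** transpose M = mat 1" using matrix_left_right_inverse by blast
  have row: "(\<Sum>a\<in>UNIV. P i a * P j a) = (if i = j then 1 else 0)" for i j
  proof -
    have "(M ** transpose M) $ i $ j = (\<Sum>a\<in>UNIV. P i a * P j a)"
      by (simp add: M_def transpose_def matrix_matrix_mult_def)
    thus ?thesis unfolding MM by (simp add: mat_def)
  qed
  have Aij: "A$i$j = (\<Sum>a\<in>UNIV. l a * P i a * P j a)" for i j
  proof -
    have "A$i$j = (\<Sum>k\<in>UNIV. A$i$k * (if k = j then 1 else 0))" by (simp add: if_distrib cong: if_cong)
    also have "\<dots> = (\<Sum>k\<in>UNIV. A$i$k * (\<Sum>a\<in>UNIV. P k a * P j a))" by (simp add: row)
    also have "\<dots> = (\<Sum>k\<in>UNIV. \<Sum>a\<in>UNIV. A$i$k * P k a * P j a)" by (simp add: sum_distrib_left mult.assoc)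
    also have "\<dots> = (\<Sum>a\<in>UNIV. \<Sum>k\<in>UNIV. A$i$k * P k a * P j a)" by (rule sum.swap)
    also have "\<dots> = (\<Sum>a\<in>UNIV. (\<Sum>k\<in>UNIV. A$i$k * P k a) * P j a)" by (simp add: sum_distrib_right)
    also have "\<dots> = (\<Sum>a\<in>UNIV. l a * P i a * P j a)"
    proof (rule sum.cong[OF refl])
      fix a
      have "(\<Sum>k\<in>UNIV. A$i$k * P k a) = (A *v V a) $ i" unfolding P_def by (simp add: matrix_vector_mult_def)
      also have "\<dots> = l a * P i a" unfolding ev P_def by simp
      finally show "(\<Sum>k\<in>UNIV. A$i$k * P k a) * P j a = l a * P i a * P j a" by simp
    qed
    finally show ?thesis .
  qed
  show ?thesis using that col row Aij by blast
qed

lemma s2e: fixes A :: "real^3^3" assumes "\<And>i j. A$i$j = A$j$i"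
  shows "sigma2 A = ((\<Sum>i\<in>UNIV. A$i$i)^2 - (\<Sum>i\<in>UNIV. \<Sum>j\<in>UNIV. A$i$j * A$i$j))/2"
  unfolding sigma2_def using assms[of 1 2] assms[of 1 3] assms[of 2 3]
  by (simp add: sum_3 power2_eq_square field_simps less_bit1_def bit1.Rep_numeral bit1.Rep_1)

lemma rearr1: fixes P :: "3\<Rightarrow>3\<Rightarrow>real" shows
 "(\<Sum>a\<in>UNIV. m a * (\<Sum>p\<in>UNIV. \<Sum>q\<in>UNIV. P p a * P q a * Z p q)) = (\<Sum>p\<in>UNIV. \<Sum>q\<in>UNIV. (\<Sum>a\<in>UNIV. m a * P p a * P q a) * Z p q)"
 by (simp only: sum_3) (simp add: algebra_simps)

lemma rearr2: fixes P :: "3\<Rightarrow>3\<Rightarrow>real" shows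
 "(\<Sum>a\<in>UNIV. m a * (\<Sum>p\<in>UNIV. P p a * X p) * (\<Sum>q\<in>UNIV. P q a * Y q)) = (\<Sum>p\<in>UNIV. \<Sum>q\<in>UNIV. (\<Sum>a\<in>UNIV. m a * P p a * P q a) * X p * Y q)"
 by (simp only: sum_3) (simp add: algebra_simps)

lemma rearr3: fixes P :: "3\<Rightarrow>3\<Rightarrow>real" and c :: "3\<Rightarrow>3\<Rightarrow>real" and T :: "3\<Rightarrow>3\<Rightarrow>3\<Rightarrow>real" shows
 "(\<Sum>p\<in>UNIV. \<Sum>q\<in>UNIV. c p q * (\<Sum>r\<in>UNIV. P r k * T p q r)) = (\<Sum>r\<in>UNIV. P r k * (\<Sum>p\<in>UNIV. \<Sum>q\<in>UNIV. c p q * T p q r))"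
 by (simp only: sum_3) (simp add: algebra_simps)

lemma delta_sum: fixes Z :: "3\<Rightarrow>3\<Rightarrow>real" shows
  "(\<Sum>p\<in>UNIV. \<Sum>q\<in>UNIV. (if p = q then 1 else 0) * Z p q) = (\<Sum>p\<in>UNIV. Z p p)"
  by (simp add: sum_3)

lemma PV: fixes P :: "3\<Rightarrow>3\<Rightarrow>real"
  assumes row: "\<And>i j. (\<Sum>a\<in>UNIV. P i a * P j a) = (if i = j then 1 else 0)"
  shows "(\<Sum>a\<in>UNIV. (\<Sum>p\<in>UNIV. P p a * X p) * (\<Sum>q\<in>UNIV. P q a * Y q)) = (\<Sum>p\<in>UNIV. X p * Y p)"
proof -
  have "(\<Sum>a\<in>UNIV. (\<Sum>p\<in>UNIV. P p a * X p) * (\<Sum>q\<in>UNIV. P q a * Y q))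
    = (\<Sum>a\<in>UNIV. 1 * (\<Sum>p\<in>UNIV. P p a * X p) * (\<Sum>q\<in>UNIV. P q a * Y q))" by simp
  also have "\<dots> = (\<Sum>p\<in>UNIV. \<Sum>q\<in>UNIV. (\<Sum>a\<in>UNIV. 1 * P p a * P q a) * X p * Y q)" by (rule rearr2)
  also have "\<dots> = (\<Sum>p\<in>UNIV. \<Sum>q\<in>UNIV. (if p = q then 1 else 0) * (X p * Y q))" by (simp add: row mult.assoc)
  also have "\<dots> = (\<Sum>p\<in>UNIV. X p * Y p)" by (rule delta_sum)
  finally show ?thesis .
qed

lemma alg_general:
  fixes A :: "real^3^3" and T :: "3 \<Rightarrow> 3 \<Rightarrow> 3 \<Rightarrow> real"
  assumes symA: "\<And>i j. A$i$j = A$j$i"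
    and sym1: "\<And>i j k. T i j k = T j i k" and sym2: "\<And>i j k. T i j k = T i k j"
    and pos1: "sigma1 A > 0" and pos2: "sigma2 A > 0"
    and cons: "\<And>k. (\<Sum>i\<in>UNIV. \<Sum>j\<in>UNIV. sigma2_cof A i j * T i j k) = 0"
  shows "(26/25) * (\<Sum>i\<in>UNIV. \<Sum>j\<in>UNIV. sigma2_cof A i j * (\<Sum>m\<in>UNIV. T m m i) * (\<Sum>m\<in>UNIV. T m m j))
     \<le> sigma1 A * (\<Sum>m\<in>UNIV. (\<Sum>i\<in>UNIV. \<Sum>j\<in>UNIV. T i j m * T i j m) - (\<Sum>i\<in>UNIV. T i i m) * (\<Sum>i\<in>UNIV. T i i m))"
proof -
  obtain P :: "3\<Rightarrow>3\<Rightarrow>real" and l :: "3\<Rightarrow>real" where col: "\<And>a b. (\<Sum>i\<in>UNIV. P i a * P i b) = (if a = b then 1 else 0)"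
    and row: "\<And>i j. (\<Sum>a\<in>UNIV. P i a * P j a) = (if i = j then 1 else 0)"
    and Aij: "\<And>i j. A$i$j = (\<Sum>a\<in>UNIV. l a * P i a * P j a)"
    using spectral3[OF symA] by blast
  define s where "s = sigma1 A"
  have s_sum: "s = (\<Sum>a\<in>UNIV. l a)"
  proof -
    have "s = (\<Sum>i\<in>UNIV. A$i$i)" unfolding s_def sigma1_def ..
    also have "\<dots> = (\<Sum>i\<in>UNIV. \<Sum>a\<in>UNIV. l a * P i a * P i a)" by (simp add: Aij)
    also have "\<dots> = (\<Sum>a\<in>UNIV. \<Sum>i\<in>UNIV. l a * P i a * P i a)" by (rule sum.swap)
    also have "\<dots> = (\<Sum>a\<in>UNIV. l a * (\<Sum>i\<in>UNIV. P i a * P i a))" by (simp add: sum_distrib_left mult.assoc)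
    also have "\<dots> = (\<Sum>a\<in>UNIV. l a)" by (simp add: col)
    finally show ?thesis .
  qed
  have s_l: "s = l 1 + l 2 + l 3" unfolding s_sum by (simp add: sum_3)
  have PVc: "(\<Sum>j\<in>UNIV. (\<Sum>a\<in>UNIV. P j a * X a) * (\<Sum>b\<in>UNIV. P j b * Y b)) = (\<Sum>a\<in>UNIV. X a * Y a)" for X Y
    using PV[of "\<lambda>p a. P a p" X Y] col by simp
  have sq: "(\<Sum>i\<in>UNIV. \<Sum>j\<in>UNIV. A$i$j * A$i$j) = (\<Sum>a\<in>UNIV. l a * l a)"
  proof -
    have Aij': "A$i$j = (\<Sum>a\<in>UNIV. P j a * (l a * P i a))" for i j unfolding Aij by (simp add: mult_ac)
    have "(\<Sum>i\<in>UNIV. \<Sum>j\<in>UNIV. A$i$j * A$i$j)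
       = (\<Sum>i\<in>UNIV. \<Sum>j\<in>UNIV. (\<Sum>a\<in>UNIV. P j a * (l a * P i a)) * (\<Sum>b\<in>UNIV. P j b * (l b * P i b)))"
      by (simp only: Aij')
    also have "\<dots> = (\<Sum>i\<in>UNIV. \<Sum>a\<in>UNIV. (l a * P i a) * (l a * P i a))" by (simp only: PVc)
    also have "\<dots> = (\<Sum>a\<in>UNIV. \<Sum>i\<in>UNIV. (l a * l a) * (P i a * P i a))" by (subst sum.swap) (simp add: mult_ac)
    also have "\<dots> = (\<Sum>a\<in>UNIV. l a * l a)" by (simp add: sum_distrib_left[symmetric] col)
    finally show ?thesis .
  qed
  have s2l: "sigma2 A = l 1 * l 2 + l 2 * l 3 + l 3 * l 1"
  proof -
    have "sigma2 A = (s^2 - (\<Sum>a\<in>UNIV. l a * l a))/2" unfolding s2e[OF symA] sq s_def sigma1_def ..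
    thus ?thesis unfolding s_l by (simp add: sum_3 power2_eq_square field_simps)
  qed
  have cof: "sigma2_cof A i j = (\<Sum>a\<in>UNIV. (s - l a) * P i a * P j a)" for i j
  proof -
    have "sigma2_cof A i j = s * (\<Sum>a\<in>UNIV. P i a * P j a) - (\<Sum>a\<in>UNIV. l a * P i a * P j a)"
      unfolding sigma2_cof_def s_def[symmetric] row Aij by simp
    also have "\<dots> = (\<Sum>a\<in>UNIV. (s - l a) * P i a * P j a)"
      by (simp add: sum_distrib_left sum_subtractf[symmetric] algebra_simps)
    finally show ?thesis .
  qed
  define W where "W c p q = (\<Sum>r\<in>UNIV. P r c * T p q r)" for c p q
  define T' where "T' a b c = (\<Sum>p\<in>UNIV. \<Sum>q\<in>UNIV. \<Sum>r\<in>UNIV. P p a * P q b * P r c * T p q r)" for a b c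
  have T'W: "T' a b c = (\<Sum>p\<in>UNIV. \<Sum>q\<in>UNIV. P p a * P q b * W c p q)" for a b c
    unfolding T'_def W_def by (simp add: sum_distrib_left mult.assoc)
  define U where "U b c p = (\<Sum>q\<in>UNIV. P q b * W c p q)" for b c p
  have T'U: "T' a b c = (\<Sum>p\<in>UNIV. P p a * U b c p)" for a b c
    unfolding T'W U_def by (simp add: sum_distrib_left mult.assoc)
  have Tsym1: "T' a b c = T' b a c" for a b c
  proof -
    have "T' b a c = (\<Sum>q\<in>UNIV. \<Sum>p\<in>UNIV. \<Sum>r\<in>UNIV. P p b * P q a * P r c * T p q r)"
      unfolding T'_def by (rule sum.swap)
    also have "\<dots> = T' a b c" unfolding T'_def
      by (intro sum.cong refl) (simp add: sym1[of _ _] mult_ac)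
    finally show ?thesis by simp
  qed
  have Tsym2: "T' a b c = T' a c b" for a b c
  proof -
    have "T' a c b = (\<Sum>p\<in>UNIV. \<Sum>r\<in>UNIV. \<Sum>q\<in>UNIV. P p a * P q c * P r b * T p q r)"
      unfolding T'_def by (intro sum.cong refl sum.swap)
    also have "\<dots> = T' a b c" unfolding T'_def
      by (intro sum.cong refl) (simp add: sym2[of _ _] mult_ac)
    finally show ?thesis by simp
  qed
  define f where "f r = (\<Sum>p\<in>UNIV. T p p r)" for r
  define f' where "f' c = (\<Sum>a\<in>UNIV. T' a a c)" for c
  have f'f: "f' c = (\<Sum>r\<in>UNIV. P r c * f r)" for c
  proof -
    have "f' c = (\<Sum>a\<in>UNIV. 1 * (\<Sum>p\<in>UNIV. \<Sum>q\<in>UNIV. P p a * P q a * W c p q))" unfolding f'_def T'W by simp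
    also have "\<dots> = (\<Sum>p\<in>UNIV. \<Sum>q\<in>UNIV. (\<Sum>a\<in>UNIV. 1 * P p a * P q a) * W c p q)" by (rule rearr1)
    also have "\<dots> = (\<Sum>p\<in>UNIV. W c p p)" by (simp add: row delta_sum)
    also have "\<dots> = (\<Sum>r\<in>UNIV. P r c * f r)" unfolding W_def f_def
      by (subst sum.swap) (simp add: sum_distrib_left)
    finally show ?thesis .
  qed
  have dcons: "(\<Sum>i\<in>UNIV. ((l 1 + l 2 + l 3) - l i) * T' i i k) = 0" for k
  proof -
    have "(\<Sum>i\<in>UNIV. ((l 1 + l 2 + l 3) - l i) * T' i i k)
       = (\<Sum>i\<in>UNIV. (s - l i) * (\<Sum>p\<in>UNIV. \<Sum>q\<in>UNIV. P p i * P q i * W k p q))" unfolding s_l T'W ..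
    also have "\<dots> = (\<Sum>p\<in>UNIV. \<Sum>q\<in>UNIV. (\<Sum>a\<in>UNIV. (s - l a) * P p a * P q a) * W k p q)" by (rule rearr1)
    also have "\<dots> = (\<Sum>p\<in>UNIV. \<Sum>q\<in>UNIV. sigma2_cof A p q * (\<Sum>r\<in>UNIV. P r k * T p q r))"
      unfolding cof W_def ..
    also have "\<dots> = (\<Sum>r\<in>UNIV. P r k * (\<Sum>p\<in>UNIV. \<Sum>q\<in>UNIV. sigma2_cof A p q * T p q r))" by (rule rearr3)
    also have "\<dots> = 0" by (simp add: cons)
    finally show ?thesis .
  qed
  have D: "(26/25) * (\<Sum>k\<in>UNIV. ((l 1 + l 2 + l 3) - l k) * (\<Sum>i\<in>UNIV. T' i i k) * (\<Sum>i\<in>UNIV. T' i i k))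
     \<le> (l 1 + l 2 + l 3) * (\<Sum>m\<in>UNIV. (\<Sum>i\<in>UNIV. \<Sum>j\<in>UNIV. T' i j m * T' i j m) - (\<Sum>i\<in>UNIV. T' i i m) * (\<Sum>i\<in>UNIV. T' i i m))"
    by (rule diag_ineq[OF Tsym1 Tsym2 _ _ dcons]) (use pos1 pos2 s_l s2l s_def in auto)
  have E1: "(\<Sum>k\<in>UNIV. ((l 1 + l 2 + l 3) - l k) * (\<Sum>i\<in>UNIV. T' i i k) * (\<Sum>i\<in>UNIV. T' i i k))
     = (\<Sum>i\<in>UNIV. \<Sum>j\<in>UNIV. sigma2_cof A i j * (\<Sum>m\<in>UNIV. T m m i) * (\<Sum>m\<in>UNIV. T m m j))"
  proof -
    have "(\<Sum>k\<in>UNIV. ((l 1 + l 2 + l 3) - l k) * (\<Sum>i\<in>UNIV. T' i i k) * (\<Sum>i\<in>UNIV. T' i i k))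
      = (\<Sum>k\<in>UNIV. (s - l k) * (\<Sum>p\<in>UNIV. P p k * f p) * (\<Sum>q\<in>UNIV. P q k * f q))"
      unfolding s_l f'_def[symmetric] f'f ..
    also have "\<dots> = (\<Sum>p\<in>UNIV. \<Sum>q\<in>UNIV. (\<Sum>a\<in>UNIV. (s - l a) * P p a * P q a) * f p * f q)" by (rule rearr2)
    also have "\<dots> = (\<Sum>i\<in>UNIV. \<Sum>j\<in>UNIV. sigma2_cof A i j * (\<Sum>m\<in>UNIV. T m m i) * (\<Sum>m\<in>UNIV. T m m j))"
      unfolding cof f_def ..
    finally show ?thesis .
  qed
  have E2: "(\<Sum>m\<in>UNIV. (\<Sum>i\<in>UNIV. T' i i m) * (\<Sum>i\<in>UNIV. T' i i m)) = (\<Sum>m\<in>UNIV. (\<Sum>i\<in>UNIV. T i i m) * (\<Sum>i\<in>UNIV. T i i m))"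
  proof -
    have "(\<Sum>m\<in>UNIV. (\<Sum>i\<in>UNIV. T' i i m) * (\<Sum>i\<in>UNIV. T' i i m)) = (\<Sum>m\<in>UNIV. (\<Sum>p\<in>UNIV. P p m * f p) * (\<Sum>q\<in>UNIV. P q m * f q))"
      unfolding f'_def[symmetric] f'f ..
    also have "\<dots> = (\<Sum>p\<in>UNIV. f p * f p)" by (rule PV[OF row])
    finally show ?thesis unfolding f_def .
  qed
  have E3: "(\<Sum>m\<in>UNIV. \<Sum>i\<in>UNIV. \<Sum>j\<in>UNIV. T' i j m * T' i j m) = (\<Sum>m\<in>UNIV. \<Sum>i\<in>UNIV. \<Sum>j\<in>UNIV. T i j m * T i j m)"
  proof -
    have "(\<Sum>m\<in>UNIV. \<Sum>i\<in>UNIV. \<Sum>j\<in>UNIV. T' i j m * T' i j m) = (\<Sum>m\<in>UNIV. \<Sum>j\<in>UNIV. \<Sum>i\<in>UNIV. T' i j m * T' i j m)"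
      by (intro sum.cong refl sum.swap)
    also have "\<dots> = (\<Sum>m\<in>UNIV. \<Sum>j\<in>UNIV. \<Sum>p\<in>UNIV. U j m p * U j m p)"
      unfolding T'U by (simp only: PV[OF row])
    also have "\<dots> = (\<Sum>m\<in>UNIV. \<Sum>p\<in>UNIV. \<Sum>j\<in>UNIV. U j m p * U j m p)"
      by (intro sum.cong refl sum.swap)
    also have "\<dots> = (\<Sum>m\<in>UNIV. \<Sum>p\<in>UNIV. \<Sum>q\<in>UNIV. W m p q * W m p q)"
      unfolding U_def by (simp only: PV[OF row])
    also have "\<dots> = (\<Sum>p\<in>UNIV. \<Sum>m\<in>UNIV. \<Sum>q\<in>UNIV. W m p q * W m p q)" by (rule sum.swap)
    also have "\<dots> = (\<Sum>p\<in>UNIV. \<Sum>q\<in>UNIV. \<Sum>m\<in>UNIV. W m p q * W m p q)" by (intro sum.cong refl sum.swap)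
    also have "\<dots> = (\<Sum>p\<in>UNIV. \<Sum>q\<in>UNIV. \<Sum>r\<in>UNIV. T p q r * T p q r)"
      unfolding W_def by (simp only: PV[OF row])
    also have "\<dots> = (\<Sum>p\<in>UNIV. \<Sum>r\<in>UNIV. \<Sum>q\<in>UNIV. T p q r * T p q r)" by (intro sum.cong refl sum.swap)
    also have "\<dots> = (\<Sum>r\<in>UNIV. \<Sum>p\<in>UNIV. \<Sum>q\<in>UNIV. T p q r * T p q r)" by (rule sum.swap)
    finally show ?thesis .
  qed
  have R: "(\<Sum>m\<in>UNIV. (\<Sum>i\<in>UNIV. \<Sum>j\<in>UNIV. T' i j m * T' i j m) - (\<Sum>i\<in>UNIV. T' i i m) * (\<Sum>i\<in>UNIV. T' i i m))
     = (\<Sum>m\<in>UNIV. (\<Sum>i\<in>UNIV. \<Sum>j\<in>UNIV. T i j m * T i j m) - (\<Sum>i\<in>UNIV. T i i m) * (\<Sum>i\<in>UNIV. T i i m))"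
    unfolding sum_subtractf E2 E3 ..
  note D2 = D[unfolded E1 R]
  show ?thesis using D2 unfolding s_l[symmetric] s_def .
qed

definition HP :: "3 \<Rightarrow> (real^3 \<Rightarrow> real) \<Rightarrow> (real^3 \<Rightarrow> real) \<Rightarrow> bool" where
  "HP i f g \<longleftrightarrow> (\<forall>x. ((\<lambda>t. f (x + t *\<^sub>R axis i 1)) has_real_derivative g x) (at 0))"

lemma HP_pd: assumes "has_pd_everywhere i f" shows "HP i f (pd i f)"
  using assms unfolding HP_def has_pd_everywhere_def pd_def
  by (simp add: DERIV_deriv_iff_real_differentiable)

lemma HP_unique: assumes "HP i f g" shows "pd i f = g"
  using assms unfolding HP_def pd_def by (auto intro!: DERIV_imp_deriv)

lemma HP_has_pd: assumes "HP i f g" shows "has_pd_everywhere i f"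
  using assms unfolding HP_def has_pd_everywhere_def by (meson real_differentiable_def)

lemma HP_at:
  assumes "HP i f g"
  shows "((\<lambda>t. f (x + t *\<^sub>R axis i 1)) has_real_derivative g (x + t0 *\<^sub>R axis i 1)) (at t0)"
proof -
  have "((\<lambda>t. f ((x + t0 *\<^sub>R axis i 1) + t *\<^sub>R axis i 1)) has_real_derivative g (x + t0 *\<^sub>R axis i 1)) (at 0)"
    using assms unfolding HP_def by blast
  moreover have "(\<lambda>t. f ((x + t0 *\<^sub>R axis i 1) + t *\<^sub>R axis i 1)) = (\<lambda>t. (\<lambda>s. f (x + s *\<^sub>R axis i 1)) (t + t0))"
    by (simp add: algebra_simps)
  ultimately show ?thesis using DERIV_shift[of "\<lambda>s. f (x + s *\<^sub>R axis i 1)" _ 0 t0] by simp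
qed

lemma HP_const: "HP i (\<lambda>x. c) (\<lambda>x. 0)"
  unfolding HP_def by simp

lemma HP_add: assumes "HP i f f'" "HP i g g'" shows "HP i (\<lambda>x. f x + g x) (\<lambda>x. f' x + g' x)"
  using assms unfolding HP_def by (auto intro: DERIV_add)

lemma HP_diff: assumes "HP i f f'" "HP i g g'" shows "HP i (\<lambda>x. f x - g x) (\<lambda>x. f' x - g' x)"
  using assms unfolding HP_def by (auto intro: DERIV_diff)

lemma HP_mult: assumes "HP i f f'" "HP i g g'" shows "HP i (\<lambda>x. f x * g x) (\<lambda>x. f' x * g x + f x * g' x)"
  unfolding HP_def
proof
  fix x
  have a: "((\<lambda>t. f (x + t *\<^sub>R axis i 1)) has_real_derivative f' x) (at 0)"
    and b: "((\<lambda>t. g (x + t *\<^sub>R axis i 1)) has_real_derivative g' x) (at 0)" using assms unfolding HP_def by blast+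
  show "((\<lambda>t. f (x + t *\<^sub>R axis i 1) * g (x + t *\<^sub>R axis i 1)) has_real_derivative f' x * g x + f x * g' x) (at 0)"
    using DERIV_mult[OF a b] by (simp add: mult.commute)
qed

lemma HP_sum: assumes "\<And>k. k \<in> S \<Longrightarrow> HP i (f k) (f' k)" and "finite S"
  shows "HP i (\<lambda>x. \<Sum>k\<in>S. f k x) (\<lambda>x. \<Sum>k\<in>S. f' k x)"
  using assms(2,1)
proof (induction S rule: finite_induct)
  case empty thus ?case by (simp add: HP_const)
next
  case (insert a S)
  thus ?case by (simp add: HP_add)
qed

lemma HP_ln: assumes "\<And>x. f x > 0" "HP i f f'" shows "HP i (\<lambda>x. ln (f x)) (\<lambda>x. f' x / f x)"
  unfolding HP_def
proof
  fix x
  have a: "((\<lambda>t. f (x + t *\<^sub>R axis i 1)) has_real_derivative f' x) (at 0)" using assms unfolding HP_def by blast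
  have "((\<lambda>t. ln (f (x + t *\<^sub>R axis i 1))) has_real_derivative inverse (f (x + 0 *\<^sub>R axis i 1)) * f' x) (at 0)"
    by (rule DERIV_chain2[OF DERIV_ln a]) (simp add: assms(1))
  thus "((\<lambda>t. ln (f (x + t *\<^sub>R axis i 1))) has_real_derivative f' x / f x) (at 0)"
    by (simp add: divide_inverse mult.commute)
qed

lemma HP_divide: assumes "\<And>x. g x \<noteq> 0" "HP i f f'" "HP i g g'"
  shows "HP i (\<lambda>x. f x / g x) (\<lambda>x. (f' x * g x - f x * g' x) / (g x * g x))"
  unfolding HP_def
proof
  fix x
  have a: "((\<lambda>t. f (x + t *\<^sub>R axis i 1)) has_real_derivative f' x) (at 0)"
    and b: "((\<lambda>t. g (x + t *\<^sub>R axis i 1)) has_real_derivative g' x) (at 0)" using assms unfolding HP_def by blast+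
  have "g (x + 0 *\<^sub>R axis i 1) \<noteq> 0" using assms(1) by simp
  from DERIV_divide[OF a b this]
  show "((\<lambda>t. f (x + t *\<^sub>R axis i 1) / g (x + t *\<^sub>R axis i 1)) has_real_derivative (f' x * g x - f x * g' x) / (g x * g x)) (at 0)"
    by simp
qed

lemma Ck_mono: "Ck (Suc n) f \<Longrightarrow> Ck n f"
proof (induction n arbitrary: f)
  case 0 thus ?case by simp
next
  case (Suc n) thus ?case by auto
qed

lemma Ck_cont: "Ck n f \<Longrightarrow> continuous_on UNIV f"
  by (cases n) auto

lemma Ck_pd: "Ck (Suc n) f \<Longrightarrow> Ck n (pd i f) \<and> has_pd_everywhere i f"
  by simp

lemma mvt_route:
  fixes g gi gij :: "real^3 \<Rightarrow> real"
  assumes Hi: "HP i g gi" and Hji: "HP j gi gij" and h: "h > 0"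
  shows "\<exists>\<sigma> \<tau>. 0 < \<sigma> \<and> \<sigma> < h \<and> 0 < \<tau> \<and> \<tau> < h \<and>
     g (x + h *\<^sub>R axis i 1 + h *\<^sub>R axis j 1) - g (x + h *\<^sub>R axis j 1) - g (x + h *\<^sub>R axis i 1) + g x
       = h * h * gij (x + \<sigma> *\<^sub>R axis i 1 + \<tau> *\<^sub>R axis j 1)"
proof -
  define ei :: "real^3" where "ei = axis i 1"
  define ej :: "real^3" where "ej = axis j 1"
  define \<phi> where "\<phi> s = g ((x + h *\<^sub>R ej) + s *\<^sub>R ei) - g (x + s *\<^sub>R ei)" for s
  have d\<phi>: "DERIV \<phi> s :> gi ((x + h *\<^sub>R ej) + s *\<^sub>R ei) - gi (x + s *\<^sub>R ei)" for s
    unfolding \<phi>_def ei_def by (intro DERIV_diff HP_at[OF Hi])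
  obtain \<sigma> where \<sigma>: "0 < \<sigma>" "\<sigma> < h" and m1: "\<phi> h - \<phi> 0 = (h - 0) * (gi ((x + h *\<^sub>R ej) + \<sigma> *\<^sub>R ei) - gi (x + \<sigma> *\<^sub>R ei))"
    using MVT2[OF h d\<phi>] by blast
  define \<psi> where "\<psi> t = gi ((x + \<sigma> *\<^sub>R ei) + t *\<^sub>R ej)" for t
  have d\<psi>: "DERIV \<psi> t :> gij ((x + \<sigma> *\<^sub>R ei) + t *\<^sub>R ej)" for t
    unfolding \<psi>_def ej_def by (rule HP_at[OF Hji])
  obtain \<tau> where \<tau>: "0 < \<tau>" "\<tau> < h" and m2: "\<psi> h - \<psi> 0 = (h - 0) * gij ((x + \<sigma> *\<^sub>R ei) + \<tau> *\<^sub>R ej)"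
    using MVT2[OF h d\<psi>] by blast
  have "\<psi> h - \<psi> 0 = gi ((x + h *\<^sub>R ej) + \<sigma> *\<^sub>R ei) - gi (x + \<sigma> *\<^sub>R ei)"
    unfolding \<psi>_def by (simp add: algebra_simps)
  hence "\<phi> h - \<phi> 0 = h * (h * gij ((x + \<sigma> *\<^sub>R ei) + \<tau> *\<^sub>R ej))" using m1 m2 by simp
  moreover have "\<phi> h - \<phi> 0 = g (x + h *\<^sub>R ei + h *\<^sub>R ej) - g (x + h *\<^sub>R ej) - g (x + h *\<^sub>R ei) + g x"
    unfolding \<phi>_def by (simp add: algebra_simps)
  ultimately show ?thesis using \<sigma> \<tau> unfolding ei_def ej_def by (metis mult.assoc)
qed

lemma cont_eps:
  fixes f :: "real^3 \<Rightarrow> real"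
  assumes "continuous_on UNIV f" "e > 0"
  shows "\<exists>d>0. \<forall>y. dist y x < d \<longrightarrow> \<bar>f y - f x\<bar> < e"
proof -
  have "isCont f x" using assms(1) continuous_on_eq_continuous_at[OF open_UNIV] by blast
  thus ?thesis using assms(2) unfolding continuous_at_eps_delta dist_real_def by blast
qed

lemma schwarz:
  fixes g gi gj gij gji :: "real^3 \<Rightarrow> real"
  assumes Hi: "HP i g gi" and Hj: "HP j g gj" and Hji: "HP j gi gij" and Hij: "HP i gj gji"
    and C1: "continuous_on UNIV gij" and C2: "continuous_on UNIV gji"
  shows "gij x = gji x"
proof (rule ccontr)
  assume ne: "gij x \<noteq> gji x"
  define d where "d = \<bar>gij x - gji x\<bar>"
  have d: "d > 0" using ne unfolding d_def by simp
  obtain d1 where d1: "d1 > 0" "\<And>y. dist y x < d1 \<Longrightarrow> \<bar>gij y - gij x\<bar> < d/2"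
    using cont_eps[OF C1, of "d/2" x] d by auto
  obtain d2 where d2: "d2 > 0" "\<And>y. dist y x < d2 \<Longrightarrow> \<bar>gji y - gji x\<bar> < d/2"
    using cont_eps[OF C2, of "d/2" x] d by auto
  define h where "h = min d1 d2 / 2"
  have h: "h > 0" using d1 d2 unfolding h_def by simp
  obtain s1 t1 where st1: "0 < s1" "s1 < h" "0 < t1" "t1 < h" and
    r1: "g (x + h *\<^sub>R axis i 1 + h *\<^sub>R axis j 1) - g (x + h *\<^sub>R axis j 1) - g (x + h *\<^sub>R axis i 1) + g x
       = h * h * gij (x + s1 *\<^sub>R axis i 1 + t1 *\<^sub>R axis j 1)"
    using mvt_route[OF Hi Hji h, of x] by blast
  obtain s2 t2 where st2: "0 < s2" "s2 < h" "0 < t2" "t2 < h" and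
    r2: "g (x + h *\<^sub>R axis j 1 + h *\<^sub>R axis i 1) - g (x + h *\<^sub>R axis i 1) - g (x + h *\<^sub>R axis j 1) + g x
       = h * h * gji (x + s2 *\<^sub>R axis j 1 + t2 *\<^sub>R axis i 1)"
    using mvt_route[OF Hj Hij h, of x] by blast
  have pe: "x + h *\<^sub>R axis j 1 + h *\<^sub>R axis i 1 = x + h *\<^sub>R axis i 1 + h *\<^sub>R axis j 1" by (simp add: algebra_simps)
  have r2': "g (x + h *\<^sub>R axis i 1 + h *\<^sub>R axis j 1) - g (x + h *\<^sub>R axis j 1) - g (x + h *\<^sub>R axis i 1) + g x
       = h * h * gji (x + s2 *\<^sub>R axis j 1 + t2 *\<^sub>R axis i 1)" using r2 unfolding pe by linarith
  have "h * h * gij (x + s1 *\<^sub>R axis i 1 + t1 *\<^sub>R axis j 1) = h * h * gji (x + s2 *\<^sub>R axis j 1 + t2 *\<^sub>R axis i 1)"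
    using r1 r2' by linarith
  hence eq: "gij (x + s1 *\<^sub>R axis i 1 + t1 *\<^sub>R axis j 1) = gji (x + s2 *\<^sub>R axis j 1 + t2 *\<^sub>R axis i 1)"
    using h by simp
  have dist: "dist (x + a *\<^sub>R axis k 1 + b *\<^sub>R axis m 1) x < min d1 d2" if "0 < a" "a < h" "0 < b" "b < h" for a b :: real and k m :: 3
  proof -
    have "dist (x + a *\<^sub>R axis k 1 + b *\<^sub>R axis m 1) x = norm (a *\<^sub>R axis k (1::real) + b *\<^sub>R axis m 1)"
      by (simp add: dist_norm)
    also have "\<dots> \<le> norm (a *\<^sub>R axis k (1::real)) + norm (b *\<^sub>R axis m (1::real))" by (rule norm_triangle_ineq)
    also have "\<dots> = a + b" using that by simp
    also have "\<dots> < min d1 d2" using that unfolding h_def by simp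
    finally show ?thesis .
  qed
  have "\<bar>gij (x + s1 *\<^sub>R axis i 1 + t1 *\<^sub>R axis j 1) - gij x\<bar> < d/2" using d1(2) dist[OF st1] by simp
  moreover have "\<bar>gji (x + s2 *\<^sub>R axis j 1 + t2 *\<^sub>R axis i 1) - gji x\<bar> < d/2" using d2(2) dist[OF st2] by simp
  moreover have "gij x - gji x = (gij x - gij (x + s1 *\<^sub>R axis i 1 + t1 *\<^sub>R axis j 1)) + (gji (x + s2 *\<^sub>R axis j 1 + t2 *\<^sub>R axis i 1) - gji x)"
    using eq by simp
  hence "d \<le> \<bar>gij (x + s1 *\<^sub>R axis i 1 + t1 *\<^sub>R axis j 1) - gij x\<bar> + \<bar>gji (x + s2 *\<^sub>R axis j 1 + t2 *\<^sub>R axis i 1) - gji x\<bar>"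
    unfolding d_def by (metis abs_triangle_ineq abs_minus_commute)
  ultimately have "d < d" by linarith
  thus False by simp
qed

lemma sch2:
  assumes "Ck 2 g" shows "pd i (pd j g) = pd j (pd i g)"
proof
  fix x
  have c: "has_pd_everywhere i g" "has_pd_everywhere j g" "has_pd_everywhere j (pd i g)" "has_pd_everywhere i (pd j g)"
     "continuous_on UNIV (pd j (pd i g))" "continuous_on UNIV (pd i (pd j g))"
    using assms by (simp_all add: numeral_2_eq_2)
  show "pd i (pd j g) x = pd j (pd i g) x"
    using schwarz[OF HP_pd[OF c(1)] HP_pd[OF c(2)] HP_pd[OF c(3)] HP_pd[OF c(4)] c(5) c(6), of x] by simp
qed

lemma Ck4_facts:
  assumes "Ck 4 u"
  shows "Ck 2 u" "\<And>i. Ck 2 (pd i u)" "\<And>i j. Ck 2 (pd i (pd j u))"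
    "\<And>i. has_pd_everywhere i u" "\<And>i j. has_pd_everywhere i (pd j u)"
    "\<And>i j k. has_pd_everywhere k (pd i (pd j u))" "\<And>i j k l. has_pd_everywhere l (pd k (pd i (pd j u)))"
proof -
  have c4: "Ck (Suc (Suc (Suc (Suc 0)))) u" using assms by (simp add: numeral_eq_Suc)
  show "Ck 2 u" "\<And>i. Ck 2 (pd i u)" "\<And>i j. Ck 2 (pd i (pd j u))"
    "\<And>i. has_pd_everywhere i u" "\<And>i j. has_pd_everywhere i (pd j u)"
    "\<And>i j k. has_pd_everywhere k (pd i (pd j u))" "\<And>i j k l. has_pd_everywhere l (pd k (pd i (pd j u)))"
    using c4 by (simp_all add: numeral_eq_Suc)
qed

lemma sigma2_expl: "sigma2 A = A$1$1*A$2$2 - A$1$2*A$2$1 + A$1$1*A$3$3 - A$1$3*A$3$1 + A$2$2*A$3$3 - A$2$3*A$3$2"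
  unfolding sigma2_def by (simp add: sum_3 less_bit1_def bit1.Rep_numeral bit1.Rep_1 algebra_simps)

lemma sum_frac:
  fixes c a :: "3\<Rightarrow>3\<Rightarrow>real" and g :: "3\<Rightarrow>real"
  assumes "F \<noteq> 0"
  shows "(\<Sum>i\<in>UNIV. \<Sum>j\<in>UNIV. c i j * ((a i j * F - g j * g i) / (F * F)))
       = (F * (\<Sum>i\<in>UNIV. \<Sum>j\<in>UNIV. c i j * a i j) - (\<Sum>i\<in>UNIV. \<Sum>j\<in>UNIV. c i j * g i * g j)) / (F * F)"
  using assms by (simp add: sum_3 field_simps)

lemma sum_frac2:
  fixes c :: "3\<Rightarrow>3\<Rightarrow>real" and g :: "3\<Rightarrow>real"
  shows "(\<Sum>i\<in>UNIV. \<Sum>j\<in>UNIV. c i j * (g i / F) * (g j / F)) = (\<Sum>i\<in>UNIV. \<Sum>j\<in>UNIV. c i j * g i * g j) / (F * F)"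
  by (cases "F = 0") (simp_all add: sum_3 field_simps)

lemma cof_contract:
  fixes T :: "3\<Rightarrow>3\<Rightarrow>real"
  shows "(\<Sum>i\<in>UNIV. \<Sum>j\<in>UNIV. ((\<Sum>a\<in>UNIV. T a a) * (if i = j then 1 else 0) - T i j) * T i j)
    = (\<Sum>a\<in>UNIV. T a a) * (\<Sum>a\<in>UNIV. T a a) - (\<Sum>i\<in>UNIV. \<Sum>j\<in>UNIV. T i j * T i j)"
  by (simp only: sum_3) (simp add: algebra_simps)

lemma HP_cong: "HP i f f' \<Longrightarrow> (\<And>x. f' x = g x) \<Longrightarrow> HP i f g"
  by (metis ext)

lemma HP_sumU: fixes f f' :: "3 \<Rightarrow> real^3 \<Rightarrow> real"
  shows "(\<And>k. HP i (f k) (f' k)) \<Longrightarrow> HP i (\<lambda>x. \<Sum>k\<in>UNIV. f k x) (\<lambda>x. \<Sum>k\<in>UNIV. f' k x)"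
  by (rule HP_sum) auto

lemma swap3: fixes c :: "3\<Rightarrow>3\<Rightarrow>real" and X :: "3\<Rightarrow>3\<Rightarrow>3\<Rightarrow>real"
  shows "(\<Sum>i\<in>UNIV. \<Sum>j\<in>UNIV. c i j * (\<Sum>m\<in>UNIV. X i j m)) = (\<Sum>m\<in>UNIV. \<Sum>i\<in>UNIV. \<Sum>j\<in>UNIV. c i j * X i j m)"
  by (simp only: sum_3) (simp add: algebra_simps)

theorem lemma3p1:
  fixes u :: "real^3 \<Rightarrow> real"
  assumes "Ck 4 u"
    and "two_convex u"
    and "\<forall>x. sigma2 (hess u x) = 1"
  shows "\<forall>x. (\<Sum>i\<in>UNIV. \<Sum>j\<in>UNIV.
            sigma2_cof (hess u x) i j * pd i (pd j (\<lambda>y. ln (lap u y))) x)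
         \<ge> (1/25) * (\<Sum>i\<in>UNIV. \<Sum>j\<in>UNIV.
            sigma2_cof (hess u x) i j * pd i (\<lambda>y. ln (lap u y)) x
              * pd j (\<lambda>y. ln (lap u y)) x)"
proof
  fix x
  note CF = Ck4_facts[OF assms(1)]
  have S2: "pd i (pd j u) = pd j (pd i u)" for i j using sch2[OF CF(1)] .
  have sym3b: "pd k (pd i (pd j u)) = pd j (pd i (pd k u))" for i j k
  proof -
    have "pd k (pd i (pd j u)) = pd i (pd k (pd j u))" using sch2[OF CF(2)[of j], of k i] .
    also have "\<dots> = pd i (pd j (pd k u))" using S2[of k j] by simp
    also have "\<dots> = pd j (pd i (pd k u))" using sch2[OF CF(2)[of k], of i j] .
    finally show ?thesis .
  qed
  have S4: "pd i (pd j (pd m (pd m u))) = pd m (pd m (pd i (pd j u)))" for i j m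
  proof -
    have "pd j (pd m (pd m u)) = pd m (pd j (pd m u))" using sch2[OF CF(2)[of m], of j m] .
    also have "\<dots> = pd m (pd m (pd j u))" using S2[of j m] by simp
    finally have "pd i (pd j (pd m (pd m u))) = pd i (pd m (pd m (pd j u)))" by simp
    also have "\<dots> = pd m (pd i (pd m (pd j u)))" using sch2[OF CF(3)[of m j], of i m] .
    also have "\<dots> = pd m (pd m (pd i (pd j u)))" using sch2[OF CF(2)[of j], of i m] by simp
    finally show ?thesis .
  qed
  have h2: "HP k (pd i (pd j u)) (pd k (pd i (pd j u)))" for i j k using HP_pd[OF CF(6)] .
  have h3: "HP l (pd k (pd i (pd j u))) (pd l (pd k (pd i (pd j u))))" for i j k l using HP_pd[OF CF(7)] .
  have hs: "hess u y $ i $ j = pd i (pd j u) y" for y i j by (simp add: hess_def)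
  have s1: "sigma1 (hess u y) = (\<Sum>m\<in>UNIV. pd m (pd m u) y)" for y by (simp add: sigma1_def hess_def)
  have cofe: "sigma2_cof (hess u y) i j = (\<Sum>m\<in>UNIV. pd m (pd m u) y) * (if i = j then 1 else 0) - pd i (pd j u) y" for y i j
    by (simp add: sigma2_cof_def s1 hs)
  have EQ1: "(\<Sum>i\<in>UNIV. \<Sum>j\<in>UNIV. sigma2_cof (hess u y) i j * pd k (pd i (pd j u)) y) = 0" for y k
  proof -
    define Ef where "Ef = (\<lambda>y. pd 1 (pd 1 u) y * pd 2 (pd 2 u) y - pd 1 (pd 2 u) y * pd 2 (pd 1 u) y
       + pd 1 (pd 1 u) y * pd 3 (pd 3 u) y - pd 1 (pd 3 u) y * pd 3 (pd 1 u) y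
       + pd 2 (pd 2 u) y * pd 3 (pd 3 u) y - pd 2 (pd 3 u) y * pd 3 (pd 2 u) y)"
    have Eone: "Ef = (\<lambda>y. 1)"
    proof
      fix y show "Ef y = 1" using assms(3) unfolding Ef_def by (simp add: sigma2_expl hs)
    qed
    have "HP k Ef (\<lambda>y. \<Sum>i\<in>UNIV. \<Sum>j\<in>UNIV. sigma2_cof (hess u y) i j * pd k (pd i (pd j u)) y)"
      unfolding Ef_def
      apply (rule HP_cong)
       apply (rule HP_add HP_diff HP_mult h2)+
      apply (simp add: sum_3 cofe S2[of 2 1] S2[of 3 1] S2[of 3 2] algebra_simps)
      done
    hence "pd k Ef = (\<lambda>y. \<Sum>i\<in>UNIV. \<Sum>j\<in>UNIV. sigma2_cof (hess u y) i j * pd k (pd i (pd j u)) y)"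
      by (rule HP_unique)
    moreover have "pd k Ef = (\<lambda>y. 0)" unfolding Eone by (rule HP_unique[OF HP_const])
    ultimately show ?thesis by metis
  qed
  have EQ2: "(\<Sum>i\<in>UNIV. \<Sum>j\<in>UNIV. ((\<Sum>a\<in>UNIV. pd l (pd a (pd a u)) y) * (if i = j then 1 else 0) - pd l (pd i (pd j u)) y) * pd k (pd i (pd j u)) y
       + sigma2_cof (hess u y) i j * pd l (pd k (pd i (pd j u))) y) = 0" for y k l
  proof -
    define G where "G = (\<lambda>y. \<Sum>i\<in>UNIV. \<Sum>j\<in>UNIV. ((\<Sum>m\<in>UNIV. pd m (pd m u) y) * (if i = j then 1 else 0) - pd i (pd j u) y) * pd k (pd i (pd j u)) y)"
    have G0: "G = (\<lambda>y. 0)"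
    proof
      fix y show "G y = 0" using EQ1[of y k] unfolding G_def cofe .
    qed
    have "HP l G (\<lambda>y. \<Sum>i\<in>UNIV. \<Sum>j\<in>UNIV. ((\<Sum>a\<in>UNIV. pd l (pd a (pd a u)) y) * (if i = j then 1 else 0) - pd l (pd i (pd j u)) y) * pd k (pd i (pd j u)) y
       + sigma2_cof (hess u y) i j * pd l (pd k (pd i (pd j u))) y)"
      unfolding G_def
      apply (rule HP_cong)
       apply (rule HP_sumU HP_mult HP_diff HP_const h2 h3)+
      apply (simp add: cofe)
      done
    hence "pd l G = (\<lambda>y. \<Sum>i\<in>UNIV. \<Sum>j\<in>UNIV. ((\<Sum>a\<in>UNIV. pd l (pd a (pd a u)) y) * (if i = j then 1 else 0) - pd l (pd i (pd j u)) y) * pd k (pd i (pd j u)) y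
       + sigma2_cof (hess u y) i j * pd l (pd k (pd i (pd j u))) y)"
      by (rule HP_unique)
    moreover have "pd l G = (\<lambda>y. 0)" unfolding G0 by (rule HP_unique[OF HP_const])
    ultimately show ?thesis by metis
  qed
  have lapf: "lap u = (\<lambda>y. \<Sum>m\<in>UNIV. pd m (pd m u) y)" by (rule ext) (simp add: lap_def s1)
  have fpos: "(\<Sum>m\<in>UNIV. pd m (pd m u) y) > 0" for y using assms(2) unfolding two_convex_def s1 by auto
  have HL: "HP j (\<lambda>y. ln (lap u y)) (\<lambda>y. (\<Sum>m\<in>UNIV. pd j (pd m (pd m u)) y) / (\<Sum>m\<in>UNIV. pd m (pd m u) y))" for j
    unfolding lapf by (rule HP_ln[OF fpos]) (rule HP_sumU, rule h2)
  have pdL: "pd j (\<lambda>y. ln (lap u y)) = (\<lambda>y. (\<Sum>m\<in>UNIV. pd j (pd m (pd m u)) y) / (\<Sum>m\<in>UNIV. pd m (pd m u) y))" for j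
    using HP_unique[OF HL] .
  have HL2: "HP i (\<lambda>y. (\<Sum>m\<in>UNIV. pd j (pd m (pd m u)) y) / (\<Sum>m\<in>UNIV. pd m (pd m u) y))
     (\<lambda>y. ((\<Sum>m\<in>UNIV. pd i (pd j (pd m (pd m u))) y) * (\<Sum>m\<in>UNIV. pd m (pd m u) y) - (\<Sum>m\<in>UNIV. pd j (pd m (pd m u)) y) * (\<Sum>m\<in>UNIV. pd i (pd m (pd m u)) y))
        / ((\<Sum>m\<in>UNIV. pd m (pd m u) y) * (\<Sum>m\<in>UNIV. pd m (pd m u) y)))" for i j
  proof (rule HP_divide)
    show "(\<Sum>m\<in>UNIV. pd m (pd m u) y) \<noteq> 0" for y using fpos[of y] by simp
    show "HP i (\<lambda>y. \<Sum>m\<in>UNIV. pd j (pd m (pd m u)) y) (\<lambda>y. \<Sum>m\<in>UNIV. pd i (pd j (pd m (pd m u))) y)"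
      by (rule HP_sumU, rule h3)
    show "HP i (\<lambda>y. \<Sum>m\<in>UNIV. pd m (pd m u) y) (\<lambda>y. \<Sum>m\<in>UNIV. pd i (pd m (pd m u)) y)"
      by (rule HP_sumU, rule h2)
  qed
  have pdL2: "pd i (pd j (\<lambda>y. ln (lap u y))) x =
     ((\<Sum>m\<in>UNIV. pd i (pd j (pd m (pd m u))) x) * (\<Sum>m\<in>UNIV. pd m (pd m u) x) - (\<Sum>m\<in>UNIV. pd j (pd m (pd m u)) x) * (\<Sum>m\<in>UNIV. pd i (pd m (pd m u)) x))
        / ((\<Sum>m\<in>UNIV. pd m (pd m u) x) * (\<Sum>m\<in>UNIV. pd m (pd m u) x))" for i j
    unfolding pdL HP_unique[OF HL2] ..
  define F where "F = (\<Sum>m\<in>UNIV. pd m (pd m u) x)"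
  define T where "T i j k = pd k (pd i (pd j u)) x" for i j k
  define c where "c i j = sigma2_cof (hess u x) i j" for i j
  define g where "g i = (\<Sum>m\<in>UNIV. T m m i)" for i
  define a where "a i j = (\<Sum>m\<in>UNIV. pd i (pd j (pd m (pd m u))) x)" for i j
  have Fpos: "F > 0" unfolding F_def by (rule fpos)
  have gdef: "(\<Sum>m\<in>UNIV. pd i (pd m (pd m u)) x) = g i" for i unfolding g_def T_def ..
  define C where "C = (\<Sum>i\<in>UNIV. \<Sum>j\<in>UNIV. c i j * g i * g j)"
  define Q where "Q = (\<Sum>m\<in>UNIV. (\<Sum>i\<in>UNIV. \<Sum>j\<in>UNIV. T i j m * T i j m) - (\<Sum>i\<in>UNIV. T i i m) * (\<Sum>i\<in>UNIV. T i i m))"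
  have LHS: "(\<Sum>i\<in>UNIV. \<Sum>j\<in>UNIV. sigma2_cof (hess u x) i j * pd i (pd j (\<lambda>y. ln (lap u y))) x)
      = (F * (\<Sum>i\<in>UNIV. \<Sum>j\<in>UNIV. c i j * a i j) - C) / (F * F)"
  proof -
    have "(\<Sum>i\<in>UNIV. \<Sum>j\<in>UNIV. sigma2_cof (hess u x) i j * pd i (pd j (\<lambda>y. ln (lap u y))) x)
       = (\<Sum>i\<in>UNIV. \<Sum>j\<in>UNIV. c i j * ((a i j * F - g j * g i) / (F * F)))"
      unfolding pdL2 gdef c_def a_def F_def ..
    also have "\<dots> = (F * (\<Sum>i\<in>UNIV. \<Sum>j\<in>UNIV. c i j * a i j) - C) / (F * F)"
      unfolding C_def by (rule sum_frac) (use Fpos in simp)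
    finally show ?thesis .
  qed
  have RHS: "(1/25) * (\<Sum>i\<in>UNIV. \<Sum>j\<in>UNIV. sigma2_cof (hess u x) i j * pd i (\<lambda>y. ln (lap u y)) x * pd j (\<lambda>y. ln (lap u y)) x)
      = (1/25) * (C / (F * F))"
  proof -
    have "(\<Sum>i\<in>UNIV. \<Sum>j\<in>UNIV. sigma2_cof (hess u x) i j * pd i (\<lambda>y. ln (lap u y)) x * pd j (\<lambda>y. ln (lap u y)) x)
       = (\<Sum>i\<in>UNIV. \<Sum>j\<in>UNIV. c i j * (g i / F) * (g j / F))"
      unfolding pdL gdef c_def F_def ..
    also have "\<dots> = C / (F * F)" unfolding C_def by (rule sum_frac2)
    finally show ?thesis by simp
  qed
  have caQ: "(\<Sum>i\<in>UNIV. \<Sum>j\<in>UNIV. c i j * a i j) = Q"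
  proof -
    have "(\<Sum>i\<in>UNIV. \<Sum>j\<in>UNIV. c i j * a i j) = (\<Sum>i\<in>UNIV. \<Sum>j\<in>UNIV. c i j * (\<Sum>m\<in>UNIV. pd m (pd m (pd i (pd j u))) x))"
      unfolding a_def by (intro sum.cong refl arg_cong2[where f="(*)"] fun_cong[OF S4])
    also have "\<dots> = (\<Sum>m\<in>UNIV. \<Sum>i\<in>UNIV. \<Sum>j\<in>UNIV. c i j * pd m (pd m (pd i (pd j u))) x)" by (rule swap3)
    also have "\<dots> = Q" unfolding Q_def
    proof (rule sum.cong[OF refl])
      fix m
      have e2: "(\<Sum>i\<in>UNIV. \<Sum>j\<in>UNIV. ((\<Sum>a\<in>UNIV. T a a m) * (if i = j then 1 else 0) - T i j m) * T i j m)
          + (\<Sum>i\<in>UNIV. \<Sum>j\<in>UNIV. c i j * pd m (pd m (pd i (pd j u))) x) = 0"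
        using EQ2[of m x m] unfolding T_def c_def by (simp add: sum.distrib)
      show "(\<Sum>i\<in>UNIV. \<Sum>j\<in>UNIV. c i j * pd m (pd m (pd i (pd j u))) x)
          = (\<Sum>i\<in>UNIV. \<Sum>j\<in>UNIV. T i j m * T i j m) - (\<Sum>i\<in>UNIV. T i i m) * (\<Sum>i\<in>UNIV. T i i m)"
        using e2 cof_contract[of "\<lambda>i j. T i j m"] by simp
    qed
    finally show ?thesis .
  qed
  have ALG: "(26/25) * C \<le> F * Q"
  proof -
    have symA: "hess u x $ i $ j = hess u x $ j $ i" for i j unfolding hs using S2 by simp
    have T1: "T i j k = T j i k" for i j k unfolding T_def using S2 by simp
    have T2: "T i j k = T i k j" for i j k unfolding T_def using sym3b by simp
    have p1: "sigma1 (hess u x) > 0" and p2: "sigma2 (hess u x) > 0" using assms(2) unfolding two_convex_def by auto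
    have cons: "(\<Sum>i\<in>UNIV. \<Sum>j\<in>UNIV. sigma2_cof (hess u x) i j * T i j k) = 0" for k
      using EQ1[of x k] unfolding T_def .
    have "sigma1 (hess u x) = F" unfolding s1 F_def ..
    thus ?thesis using alg_general[OF symA T1 T2 p1 p2 cons] unfolding C_def Q_def c_def g_def by simp
  qed
  have FF: "F * F > 0" using Fpos by simp
  have "C / 25 \<le> F * Q - C" using ALG by simp
  hence "(C / 25) / (F * F) \<le> (F * Q - C) / (F * F)" by (rule divide_right_mono) (use FF in simp)
  thus "(1/25) * (\<Sum>i\<in>UNIV. \<Sum>j\<in>UNIV. sigma2_cof (hess u x) i j * pd i (\<lambda>y. ln (lap u y)) x * pd j (\<lambda>y. ln (lap u y)) x)
    \<le> (\<Sum>i\<in>UNIV. \<Sum>j\<in>UNIV. sigma2_cof (hess u x) i j * pd i (pd j (\<lambda>y. ln (lap u y))) x)"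
    unfolding LHS RHS caQ by simp
qed

end
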